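(* Let $\beta\ge 4$ be a constant, let $n$ be sufficiently large, and let $\alpha=\beta/\log n$. Throw $n$ balls independently and uniformly at random into $m=\alpha n=\beta n/\log n$ bins, and let $X_1$ be the number of bins containing exactly one ball. Then $X_1\ge n^{1-1/\beta}/(4\log n)$ with high probability, i.e., with probability at least $1-n^{-c}$ for an arbitrary fixed constant $c$ (for $n$ sufficiently large).
   Context: All logarithms are natural. The number of bins $m=\beta n/\log n$ is assumed to be an integer. *)

theory Defs
  imports "HOL-Probability.Probability"
begin

definition balls_into_bins :: "nat \<Rightarrow> nat \<Rightarrow> (nat \<Rightarrow> nat) pmf" where
  "balls_into_bins n m = pmf_of_set ({..<n} \<rightarrow>\<^sub>E {..<m})"

definition singleton_bins :: "nat \<Rightarrow> nat \<Rightarrow> (nat \<Rightarrow> nat) \<Rightarrow> nat" where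
  "singleton_bins n m f = card {j \<in> {..<m}. card {i \<in> {..<n}. f i = j} = 1}"

end

theory Submission
  imports Defs "HOL-Real_Asymp.Real_Asymp"
begin


lemma exp_le_quad:
  fixes x :: real assumes "\<bar>x\<bar> \<le> 1" shows "exp x \<le> 1 + x + x^2"
proof (cases "x \<ge> 0")
  case True then show ?thesis using exp_bound[of x] assms by auto
next
  case False
  have "1 - x \<le> exp (-x)" using exp_ge_add_one_self[of "-x"] by simp
  hence "exp x \<le> 1 / (1 - x)" using False
    by (simp add: exp_minus field_simps)
  also have "\<dots> \<le> 1 + x + x^2"
  proof -
    have "1 \<le> (1 - x) * (1 + x + x^2)" using False by (simp add: algebra_simps power2_eq_square power3_eq_cube)
      (smt (verit) False mult_nonneg_nonneg mult_nonpos_nonneg zero_le_square)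
    thus ?thesis using False by (simp add: field_simps)
  qed
  finally show ?thesis .
qed

lemma sum_PiE_Suc:
  assumes "finite M"
  shows "(\<Sum>x\<in>PiE {..<Suc n} (\<lambda>_. M). h x) = (\<Sum>x\<in>PiE {..<n} (\<lambda>_. M). \<Sum>a\<in>M. h (x(n:=a)))"
proof -
  have e: "PiE {..<Suc n} (\<lambda>_. M) = (\<lambda>(y, g). g(n := y)) ` (M \<times> PiE {..<n} (\<lambda>_. M))"
    by (simp add: lessThan_Suc PiE_insert_eq)
  have i: "inj_on (\<lambda>(y, g). g(n := y)) (M \<times> PiE {..<n} (\<lambda>_. M))"
    using inj_combinator[of n "{..<n}" "\<lambda>_. M"] by simp
  have "(\<Sum>x\<in>PiE {..<Suc n} (\<lambda>_. M). h x) = sum (h \<circ> (\<lambda>(y, g). g(n := y))) (M \<times> PiE {..<n} (\<lambda>_. M))"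
    unfolding e by (rule sum.reindex[OF i])
  also have "\<dots> = (\<Sum>(a,x)\<in>M \<times> PiE {..<n} (\<lambda>_. M). h (x(n := a)))"
    by (simp add: case_prod_unfold comp_def)
  also have "\<dots> = (\<Sum>a\<in>M. \<Sum>x\<in>PiE {..<n} (\<lambda>_. M). h (x(n:=a)))"
    by (rule sum.cartesian_product[symmetric])
  also have "\<dots> = (\<Sum>x\<in>PiE {..<n} (\<lambda>_. M). \<Sum>a\<in>M. h (x(n:=a)))"
    by (rule sum.swap)
  finally show ?thesis .
qed

lemma inner_exp:
  fixes y :: "'a \<Rightarrow> real"
  assumes "finite M" "sum y M = 0" "\<And>a. a \<in> M \<Longrightarrow> \<bar>y a\<bar> \<le> d" "0 \<le> l" "l * d \<le> 1"
  shows "(\<Sum>a\<in>M. exp (l * y a)) \<le> card M * exp (l^2 * d^2)"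
proof -
  have "(\<Sum>a\<in>M. exp (l * y a)) \<le> (\<Sum>a\<in>M. 1 + l * y a + l^2 * d^2)"
  proof (rule sum_mono)
    fix a assume a: "a \<in> M"
    have ya: "\<bar>y a\<bar> \<le> d" using assms a by auto
    have "\<bar>l * y a\<bar> \<le> l * d" using ya assms(4) by (simp add: abs_mult mult_left_mono)
    hence "exp (l * y a) \<le> 1 + l * y a + (l * y a)^2" using assms(5) by (intro exp_le_quad) auto
    also have "(l * y a)^2 \<le> l^2 * d^2"
    proof -
      have "(l * y a)^2 = \<bar>l * y a\<bar>^2" by simp
      also have "\<dots> \<le> (l*d)^2" using \<open>\<bar>l * y a\<bar> \<le> l * d\<close> by (intro power_mono) auto
      finally show ?thesis by (simp add: power_mult_distrib)
    qed
    finally show "exp (l * y a) \<le> 1 + l * y a + l^2 * d^2" by simp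
  qed
  also have "\<dots> = card M * (1 + l^2 * d^2)"
    using assms(2) by (simp add: sum.distrib sum_distrib_left[symmetric] algebra_simps)
  also have "\<dots> \<le> card M * exp (l^2 * d^2)"
    using exp_ge_add_one_self[of "l^2*d^2"] by (intro mult_left_mono) auto
  finally show ?thesis .
qed

definition bdd_diff :: "nat \<Rightarrow> 'a set \<Rightarrow> real \<Rightarrow> ((nat \<Rightarrow> 'a) \<Rightarrow> real) \<Rightarrow> bool" where
  "bdd_diff n M d f \<longleftrightarrow> (\<forall>x\<in>PiE {..<n} (\<lambda>_. M). \<forall>i<n. \<forall>a\<in>M. \<bar>f x - f (x(i:=a))\<bar> \<le> d)"

lemma conc:
  fixes f :: "(nat \<Rightarrow> 'a) \<Rightarrow> real"
  assumes M: "finite M" "M \<noteq> {}" and l: "0 \<le> l" "l * d \<le> 1" and bd: "bdd_diff n M d f"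
  shows "(\<Sum>x\<in>PiE {..<n} (\<lambda>_. M). exp (l * ((\<Sum>z\<in>PiE {..<n} (\<lambda>_. M). f z) / card M ^ n - f x)))
          \<le> card M ^ n * exp (n * l^2 * d^2)"
  using bd
proof (induction n arbitrary: f)
  case 0
  then show ?case by simp
next
  case (Suc n)
  define P where "P = PiE {..<n} (\<lambda>_. M)"
  define k where "k = real (card M)"
  have kpos: "k > 0" using M by (simp add: k_def card_gt_0_iff)
  define g where "g x = (\<Sum>a\<in>M. f (x(n:=a))) / k" for x
  have updP: "x(n:=a) \<in> PiE {..<Suc n} (\<lambda>_. M)" if "x \<in> P" "a \<in> M" for x a
    using that by (auto simp: P_def PiE_def extensional_def Pi_def less_Suc_eq)
  have bdg: "bdd_diff n M d g"
    unfolding bdd_diff_def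
  proof (intro ballI allI impI)
    fix x i a assume x: "x \<in> PiE {..<n} (\<lambda>_. M)" and i: "i < n" and a: "a \<in> M"
    have "\<bar>g x - g (x(i:=a))\<bar> = \<bar>(\<Sum>b\<in>M. f (x(n:=b)) - f ((x(n:=b))(i:=a)))\<bar> / k"
      using i kpos by (simp add: g_def sum_subtractf[symmetric] diff_divide_distrib[symmetric] fun_upd_twist)
    also have "\<dots> \<le> (\<Sum>b\<in>M. \<bar>f (x(n:=b)) - f ((x(n:=b))(i:=a))\<bar>) / k"
      using kpos by (intro divide_right_mono sum_abs) auto
    also have "\<dots> \<le> (\<Sum>b\<in>M. d) / k"
      using kpos Suc.prems updP[of x] x i a unfolding bdd_diff_def P_def
      by (intro divide_right_mono sum_mono) auto
    also have "\<dots> = d" using kpos by (simp add: k_def)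
    finally show "\<bar>g x - g (x(i:=a))\<bar> \<le> d" .
  qed
  have IH: "(\<Sum>x\<in>P. exp (l * ((\<Sum>z\<in>P. g z) / card M ^ n - g x))) \<le> card M ^ n * exp (n * l^2 * d^2)"
    using Suc.IH[OF bdg] by (simp add: P_def)
  have sumf: "(\<Sum>z\<in>PiE {..<Suc n} (\<lambda>_. M). f z) = k * (\<Sum>z\<in>P. g z)"
  proof -
    have kg: "k * g x = (\<Sum>a\<in>M. f (x(n:=a)))" for x using kpos by (simp add: g_def)
    show ?thesis by (simp add: sum_PiE_Suc[OF M(1)] P_def sum_distrib_left kg)
  qed
  define E where "E = (\<Sum>z\<in>P. g z) / card M ^ n"
  have E: "(\<Sum>z\<in>PiE {..<Suc n} (\<lambda>_. M). f z) / card M ^ Suc n = E"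
    using kpos by (simp add: sumf E_def k_def)
  have inner: "(\<Sum>a\<in>M. exp (l * (g x - f (x(n:=a))))) \<le> k * exp (l^2 * d^2)" if x: "x \<in> P" for x
  proof -
    have "(\<Sum>a\<in>M. exp (l * (g x - f (x(n:=a))))) \<le> card M * exp (l^2 * d^2)"
    proof (rule inner_exp[OF M(1) _ _ l])
      show "(\<Sum>a\<in>M. g x - f (x(n:=a))) = 0"
        using kpos by (simp add: sum_subtractf g_def k_def)
      fix a assume a: "a \<in> M"
      have "\<bar>g x - f (x(n:=a))\<bar> = \<bar>(\<Sum>b\<in>M. f ((x(n:=a))(n:=b)) - f (x(n:=a)))\<bar> / k"
      proof -
        have "g x - f (x(n:=a)) = (\<Sum>b\<in>M. f ((x(n:=a))(n:=b)) - f (x(n:=a))) / k"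
          using kpos by (simp add: g_def sum_subtractf k_def field_simps)
        thus ?thesis using kpos by (simp add: abs_divide)
      qed
      also have "\<dots> \<le> (\<Sum>b\<in>M. \<bar>f ((x(n:=a))(n:=b)) - f (x(n:=a))\<bar>) / k"
        using kpos by (intro divide_right_mono sum_abs) auto
      also have "\<dots> \<le> (\<Sum>b\<in>M. d) / k"
        using kpos Suc.prems updP[OF x a] unfolding bdd_diff_def
      proof (intro divide_right_mono sum_mono)
        fix b assume b: "b \<in> M"
        have "\<bar>f (x(n:=a)) - f ((x(n:=a))(n:=b))\<bar> \<le> d"
          using Suc.prems updP[OF x a] b unfolding bdd_diff_def by blast
        thus "\<bar>f ((x(n:=a))(n:=b)) - f (x(n:=a))\<bar> \<le> d" by (simp add: abs_minus_commute)
      qed (use kpos in auto)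
      also have "\<dots> = d" using kpos by (simp add: k_def)
      finally show "\<bar>g x - f (x(n:=a))\<bar> \<le> d" .
    qed
    thus ?thesis by (simp add: k_def)
  qed
  have "(\<Sum>x\<in>PiE {..<Suc n} (\<lambda>_. M). exp (l * (E - f x)))
      = (\<Sum>x\<in>P. exp (l * (E - g x)) * (\<Sum>a\<in>M. exp (l * (g x - f (x(n:=a))))))"
    by (simp add: sum_PiE_Suc[OF M(1)] P_def sum_distrib_left exp_add[symmetric] algebra_simps)
  also have "\<dots> \<le> (\<Sum>x\<in>P. exp (l * (E - g x)) * (k * exp (l^2 * d^2)))"
    by (intro sum_mono mult_left_mono inner) auto
  also have "\<dots> = k * exp (l^2 * d^2) * (\<Sum>x\<in>P. exp (l * (E - g x)))"
    by (simp add: sum_distrib_left sum_distrib_right algebra_simps)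
  also have "\<dots> \<le> k * exp (l^2 * d^2) * (card M ^ n * exp (n * l^2 * d^2))"
    using IH kpos by (intro mult_left_mono) (auto simp: E_def)
  also have "\<dots> = card M ^ Suc n * exp (Suc n * l^2 * d^2)"
    by (simp add: k_def algebra_simps exp_add[symmetric])
  finally show ?case by (simp only: E)
qed


lemma tail:
  fixes f :: "(nat \<Rightarrow> 'a) \<Rightarrow> real"
  assumes M: "finite M" "M \<noteq> {}" and d: "0 < d" and n: "n > 0" and bd: "bdd_diff n M d f"
    and t: "0 \<le> t" "t \<le> 2 * n * d"
  shows "card {x\<in>PiE {..<n} (\<lambda>_. M). f x \<le> (\<Sum>z\<in>PiE {..<n} (\<lambda>_. M). f z) / card M ^ n - t}
          \<le> card M ^ n * exp (- (t^2) / (4 * n * d^2))"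
proof -
  define P where "P = PiE {..<n} (\<lambda>_. M)"
  define E where "E = (\<Sum>z\<in>P. f z) / card M ^ n"
  define S where "S = {x\<in>P. f x \<le> E - t}"
  define l where "l = t / (2 * n * d^2)"
  have l0: "0 \<le> l" using t d n by (simp add: l_def)
  have ld: "l * d \<le> 1"
  proof -
    have "l * d = t / (2 * n * d)" using d by (simp add: l_def power2_eq_square)
    also have "\<dots> \<le> 1" using t d n by (simp add: divide_le_eq)
    finally show ?thesis .
  qed
  have fin: "finite P" using M by (simp add: P_def finite_PiE)
  have cardP: "card P = card M ^ n" by (simp add: P_def card_PiE)
  have "card S * exp (l * t) = (\<Sum>x\<in>S. exp (l * t))" by simp
  also have "\<dots> \<le> (\<Sum>x\<in>S. exp (l * (E - f x)))"
    by (intro sum_mono) (use l0 in \<open>auto simp: S_def intro!: mult_left_mono\<close>)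
  also have "\<dots> \<le> (\<Sum>x\<in>P. exp (l * (E - f x)))"
    by (intro sum_mono2 fin) (auto simp: S_def)
  also have "\<dots> \<le> card M ^ n * exp (n * l^2 * d^2)"
    using conc[OF M l0 ld bd] by (simp add: P_def E_def)
  finally have *: "card S * exp (l * t) \<le> card M ^ n * exp (n * l^2 * d^2)" .
  have "card S \<le> card M ^ n * exp (n * l^2 * d^2) / exp (l * t)"
    using * by (simp add: field_simps)
  also have "\<dots> = card M ^ n * exp (n * l^2 * d^2 - l * t)" by (simp add: exp_diff)
  also have "n * l^2 * d^2 - l * t = - (t^2) / (4 * n * d^2)"
    using d n by (simp add: l_def field_simps power2_eq_square)
  finally show ?thesis by (simp add: S_def P_def E_def)
qed

lemma singleton_bins_change:
  assumes "\<And>k. k \<noteq> i \<Longrightarrow> x k = y k"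
  shows "singleton_bins n m x \<le> singleton_bins n m y + 2"
proof -
  define A where "A = {j \<in> {..<m}. card {k \<in> {..<n}. x k = j} = 1}"
  define B where "B = {j \<in> {..<m}. card {k \<in> {..<n}. y k = j} = 1}"
  have eq: "{k \<in> {..<n}. x k = j} = {k \<in> {..<n}. y k = j}" if "j \<noteq> x i" "j \<noteq> y i" for j
    using assms that by (metis)
  have "A \<subseteq> B \<union> {x i, y i}"
    unfolding A_def B_def using eq by auto
  hence "card A \<le> card (B \<union> {x i, y i})" by (intro card_mono) (auto simp: B_def)
  also have "\<dots> \<le> card B + card {x i, y i}" by (rule card_Un_le)
  also have "card {x i, y i} \<le> 2" by (simp add: card_insert_le_m1)
  finally show ?thesis by (simp add: singleton_bins_def A_def B_def)
qed

lemma bdd_singleton: "bdd_diff n {..<m} 2 (\<lambda>f. real (singleton_bins n m f))"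
  unfolding bdd_diff_def
proof (intro ballI allI impI)
  fix x i a assume "i < n"
  have 1: "singleton_bins n m x \<le> singleton_bins n m (x(i:=a)) + 2"
    by (rule singleton_bins_change[of i]) auto
  have 2: "singleton_bins n m (x(i:=a)) \<le> singleton_bins n m x + 2"
    by (rule singleton_bins_change[of i]) auto
  show "\<bar>real (singleton_bins n m x) - real (singleton_bins n m (x(i:=a)))\<bar> \<le> 2"
    using 1 2 by linarith
qed

lemma card_one_bin:
  assumes "j < m"
  shows "card {f \<in> {..<n} \<rightarrow>\<^sub>E {..<m}. card {k \<in> {..<n}. f k = j} = 1} = n * (m - 1) ^ (n - 1)"
proof -
  define Q where "Q i = PiE {..<n} (\<lambda>k. if k = i then {j} else {..<m} - {j})" for i
  have seteq: "{f \<in> {..<n} \<rightarrow>\<^sub>E {..<m}. card {k \<in> {..<n}. f k = j} = 1} = (\<Union>i<n. Q i)"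
  proof (intro equalityI subsetI)
    fix f assume "f \<in> {f \<in> {..<n} \<rightarrow>\<^sub>E {..<m}. card {k \<in> {..<n}. f k = j} = 1}"
    then have f: "f \<in> {..<n} \<rightarrow>\<^sub>E {..<m}" and c: "card {k \<in> {..<n}. f k = j} = 1" by auto
    from c obtain i where i: "{k \<in> {..<n}. f k = j} = {i}" by (auto simp: card_Suc_eq)
    hence "i < n" "f i = j" "\<And>k. k < n \<Longrightarrow> k \<noteq> i \<Longrightarrow> f k \<noteq> j" by auto
    with f have "f \<in> Q i" by (auto simp: Q_def PiE_def Pi_def)
    with \<open>i < n\<close> show "f \<in> (\<Union>i<n. Q i)" by auto
  next
    fix f assume "f \<in> (\<Union>i<n. Q i)"
    then obtain i where i: "i < n" "f \<in> Q i" by auto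
    hence fi: "\<forall>k<n. f k \<in> (if k = i then {j} else {..<m} - {j})" by (auto simp: Q_def PiE_def Pi_def)
    have "{k \<in> {..<n}. f k = j} = {i}"
    proof (intro equalityI subsetI)
      fix k assume "k \<in> {k \<in> {..<n}. f k = j}"
      thus "k \<in> {i}" using fi by (cases "k = i") auto
    qed (use fi i in auto)
    moreover have "f \<in> {..<n} \<rightarrow>\<^sub>E {..<m}" using i assms by (auto simp: Q_def PiE_def Pi_def split: if_splits)
    ultimately show "f \<in> {f \<in> {..<n} \<rightarrow>\<^sub>E {..<m}. card {k \<in> {..<n}. f k = j} = 1}" by auto
  qed
  have cardQ: "card (Q i) = (m - 1) ^ (n - 1)" if "i < n" for i
  proof -
    have "card (Q i) = (\<Prod>k<n. card (if k = i then {j} else {..<m} - {j}))"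
      by (simp add: Q_def card_PiE)
    also have "\<dots> = (\<Prod>k<n. if k = i then 1 else m - 1)"
      using assms by (intro prod.cong) auto
    also have "\<dots> = (\<Prod>k\<in>{..<n} - {i}. m - 1)"
      using that by (simp add: prod.If_cases Int_absorb1 Diff_eq[symmetric] lessThan_def)
    also have "\<dots> = (m - 1) ^ (n - 1)" using that by simp
    finally show ?thesis .
  qed
  have disj: "Q a \<inter> Q b = {}" if "a \<noteq> b" "a < n" "b < n" for a b
  proof (rule ccontr)
    assume "Q a \<inter> Q b \<noteq> {}"
    then obtain f where "f \<in> Q a" "f \<in> Q b" by auto
    hence "f a \<in> {j}" "f a \<in> {..<m} - {j}" using that by (auto simp: Q_def PiE_def Pi_def)
    thus False by auto
  qed
  have "card (\<Union>i<n. Q i) = (\<Sum>i<n. card (Q i))"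
  proof (rule card_UN_disjoint)
    show "\<forall>i\<in>{..<n}. finite (Q i)" by (simp add: Q_def finite_PiE)
    show "\<forall>i\<in>{..<n}. \<forall>k\<in>{..<n}. i \<noteq> k \<longrightarrow> Q i \<inter> Q k = {}"
      using disj by blast
  qed simp
  also have "\<dots> = n * (m - 1) ^ (n - 1)" using cardQ by simp
  finally show ?thesis using seteq by simp
qed

lemma sum_singleton:
  "(\<Sum>f\<in>{..<n} \<rightarrow>\<^sub>E {..<m}. real (singleton_bins n m f)) = real m * n * (real m - 1) ^ (n - 1)"
proof -
  have "(\<Sum>f\<in>{..<n} \<rightarrow>\<^sub>E {..<m}. real (singleton_bins n m f))
      = (\<Sum>f\<in>{..<n} \<rightarrow>\<^sub>E {..<m}. \<Sum>j<m. if card {k \<in> {..<n}. f k = j} = 1 then 1 else 0)"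
    by (simp add: singleton_bins_def sum.If_cases Int_def)
  also have "\<dots> = (\<Sum>j<m. \<Sum>f\<in>{..<n} \<rightarrow>\<^sub>E {..<m}. if card {k \<in> {..<n}. f k = j} = 1 then 1 else 0)"
    by (rule sum.swap)
  also have "\<dots> = (\<Sum>j<m. real (n * (m - 1) ^ (n - 1)))"
  proof (intro sum.cong refl)
    fix j assume "j \<in> {..<m}"
    hence j: "j < m" by simp
    have "(\<Sum>f\<in>{..<n} \<rightarrow>\<^sub>E {..<m}. if card {k \<in> {..<n}. f k = j} = 1 then 1 else (0::real))
       = (\<Sum>f\<in>{f \<in> {..<n} \<rightarrow>\<^sub>E {..<m}. card {k \<in> {..<n}. f k = j} = 1}. 1)"
      by (rule sum.inter_filter[symmetric]) (simp add: finite_PiE)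
    also have "\<dots> = real (n * (m - 1) ^ (n - 1))"
      by (simp only: card_one_bin[OF j, symmetric]) simp
    finally show "(\<Sum>f\<in>{..<n} \<rightarrow>\<^sub>E {..<m}. if card {k \<in> {..<n}. f k = j} = 1 then 1 else (0::real))
       = real (n * (m - 1) ^ (n - 1))" .
  qed
  also have "\<dots> = real m * n * (real m - 1) ^ (n - 1)"
    by (cases "m = 0") (auto simp: of_nat_diff)
  finally show ?thesis .
qed


lemma ln_bound_pow:
  fixes m :: real and n :: nat
  assumes "m > 1"
  shows "((m - 1) / m) ^ n \<ge> exp (- real n / (m - 1))"
proof -
  have pos: "(m - 1) / m > 0" using assms by simp
  have "ln ((m - 1) / m) = - ln (1 + 1 / (m - 1))"
  proof -
    have "1 + 1 / (m - 1) = m / (m - 1)" using assms by (simp add: field_simps)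
    thus ?thesis using assms by (simp add: ln_div)
  qed
  also have "\<dots> \<ge> - (1 / (m - 1))"
    using ln_add_one_self_le_self[of "1 / (m - 1)"] assms by simp
  finally have l: "ln ((m - 1) / m) \<ge> - (1 / (m - 1))" .
  have "((m - 1) / m) ^ n = exp (real n * ln ((m - 1) / m))"
    using pos by (simp add: exp_of_nat_mult)
  also have "\<dots> \<ge> exp (- real n / (m - 1))"
  proof -
    have "real n * ln ((m - 1) / m) \<ge> real n * (- (1 / (m - 1)))"
      using l by (intro mult_left_mono) auto
    thus ?thesis by simp
  qed
  finally show ?thesis .
qed

theorem lemma2p3:
  fixes \<beta> c :: real
  assumes "\<beta> \<ge> 4" and "c > 0"
  shows "\<exists>N::nat. \<forall>n m. n \<ge> N \<longrightarrow> real m = \<beta> * real n / ln (real n) \<longrightarrow>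
           measure_pmf.prob (balls_into_bins n m)
             {f. real (singleton_bins n m f) \<ge> real n powr (1 - 1 / \<beta>) / (4 * ln (real n))}
           \<ge> 1 - real n powr (- c)"
proof -
  have ev: "eventually (\<lambda>n::nat. (ln (real n))^2/16 + ln (real n) \<le> real n * ln 2 \<and>
     ln (real n) \<ge> 1 \<and> ln (real n) \<le> 2 * real n \<and> c * ln (real n) \<le> sqrt (real n) / 256) sequentially"
    using assms(2) by (intro eventually_conj; real_asymp)
  then obtain N where N: "\<And>n. n \<ge> N \<Longrightarrow> (ln (real n))^2/16 + ln (real n) \<le> real n * ln 2 \<and>
     ln (real n) \<ge> 1 \<and> ln (real n) \<le> 2 * real n \<and> c * ln (real n) \<le> sqrt (real n) / 256"
    unfolding eventually_sequentially by blast
  show ?thesis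
  proof (intro exI allI impI)
    fix n m assume nN: "n \<ge> N" and mdef: "real m = \<beta> * real n / ln (real n)"
    note F = N[OF nN]
    define ln' where "ln' = ln (real n)"
    have ln1: "ln' \<ge> 1" using F by (simp add: ln'_def)
    have n0: "n \<noteq> 0" using ln1 unfolding ln'_def by (cases "n = 0") auto
    have n1: "real n > 1" using ln1 n0 unfolding ln'_def by (cases "n = 1") auto
    have npos: "n > 0" using n1 by simp
    have bpos: "\<beta> > 0" using assms by simp
    define L where "L = ln' / \<beta>"
    have Lpos: "L > 0" using ln1 bpos by (simp add: L_def)
    have L4: "L \<le> ln' / 4" unfolding L_def using ln1 assms(1) by (intro divide_left_mono) auto
    have mL: "real m = real n / L" using mdef bpos by (simp add: L_def ln'_def field_simps)
    have m2: "real m \<ge> 2"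
    proof -
      have "2 * ln' \<le> 4 * real n" using F by (simp add: ln'_def)
      hence "2 \<le> real n / (ln' / 4)" using ln1 by (simp add: le_divide_eq)
      also have "\<dots> \<le> real n / L" using L4 Lpos by (intro divide_left_mono) auto
      finally show ?thesis using mL by simp
    qed
    have mpos: "m > 0" using m2 by simp
    define P where "P = ({..<n} \<rightarrow>\<^sub>E {..<m})"
    define X where "X f = real (singleton_bins n m f)" for f
    define E where "E = (\<Sum>z\<in>P. X z) / real (card {..<m}) ^ n"
    have Xeq: "(\<lambda>f. real (singleton_bins n m f)) = X" by (simp add: X_def fun_eq_iff)
    have finP: "finite P" by (simp add: P_def finite_PiE)
    have cardP: "card P = m ^ n" by (simp add: P_def card_PiE)
    have PnE: "P \<noteq> {}" using mpos by (auto simp: P_def PiE_eq_empty_iff lessThan_empty_iff)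
    have Eeq: "E = real n * ((real m - 1) / real m) ^ (n - 1)"
    proof -
      have "E = real m * n * (real m - 1) ^ (n - 1) / real m ^ n"
        by (simp add: E_def X_def sum_singleton[unfolded P_def] P_def)
      also have "real m ^ n = real m * real m ^ (n - 1)" using npos by (cases n) auto
      finally show ?thesis using mpos by (simp add: power_divide)
    qed
    have q01: "0 \<le> (real m - 1) / real m" "(real m - 1) / real m \<le> 1" using m2 by auto
    have E_le: "E \<le> real n"
      using Eeq q01 by (simp add: mult_left_le power_le_one)
    have E_ge1: "E \<ge> real n * ((real m - 1) / real m) ^ n"
      unfolding Eeq using npos q01 by (intro mult_left_mono power_decreasing) auto
    have E_ge2: "E \<ge> real n * exp (- real n / (real m - 1))"
      using E_ge1 mult_left_mono[OF ln_bound_pow[of "real m" n], of "real n"] m2 by simp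
    have key: "real n / (real m - 1) \<le> L + ln 2"
    proof -
      have "L^2 + L * ln 2 \<le> ln'^2/16 + ln'"
      proof -
        have "L^2 \<le> (ln'/4)^2" using L4 Lpos by (intro power_mono) auto
        moreover have "L * ln 2 \<le> ln'"
        proof -
          have "L * ln 2 \<le> L * 1" using Lpos ln_2_less_1 by (intro mult_left_mono) auto
          thus ?thesis using L4 ln1 by linarith
        qed
        ultimately show ?thesis by (simp add: power_divide)
      qed
      also have "\<dots> \<le> real n * ln 2" using F by (simp add: ln'_def)
      finally have A: "L^2 + L * ln 2 \<le> real n * ln 2" .
      have mm: "real m - 1 > 0" using m2 by simp
      have "real n \<le> (L + ln 2) * (real m - 1)"
      proof -
        have "(L + ln 2) * (real m - 1) = real n + (real n * ln 2 - L^2 - L * ln 2) / L"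
          using Lpos by (simp add: mL field_simps power2_eq_square)
        moreover have "(real n * ln 2 - L^2 - L * ln 2) / L \<ge> 0" using A Lpos by simp
        ultimately show ?thesis by linarith
      qed
      thus ?thesis using mm by (simp add: divide_le_eq)
    qed
    define A where "A = real n powr (1 - 1 / \<beta>)"
    have Apos: "A > 0" using n1 by (simp add: A_def)
    have "exp (- real n / (real m - 1)) \<ge> exp (- (L + ln 2))"
      using key by simp
    also have "exp (- (L + ln 2)) = real n powr (- 1 / \<beta>) / 2"
    proof -
      have e1: "exp (- (L + ln 2)) = exp (- L) / exp (ln 2)"
        by (simp only: diff_conv_add_uminus[symmetric] minus_add_distrib exp_diff)
      have e0: "(- 1 / \<beta>) * ln (real n) = - L" by (simp add: L_def ln'_def)
      have e2: "exp (- L) = real n powr (- 1 / \<beta>)"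
      proof -
        have p: "real n powr (- 1 / \<beta>) = exp ((- 1 / \<beta>) * ln (real n))"
          using n1 by (simp add: powr_def)
        show ?thesis unfolding p e0 by (rule refl)
      qed
      show ?thesis using e1 e2 by simp
    qed
    finally have ee: "exp (- real n / (real m - 1)) \<ge> real n powr (- 1 / \<beta>) / 2" .
    have "E \<ge> real n * (real n powr (- 1 / \<beta>) / 2)"
      using E_ge2 mult_left_mono[OF ee, of "real n"] by simp
    also have "real n * (real n powr (- 1 / \<beta>) / 2) = A / 2"
    proof -
      have "real n * real n powr (- 1 / \<beta>) = real n powr (1 + - 1 / \<beta>)"
        by (rule powr_mult_base) simp
      thus ?thesis by (simp add: A_def)
    qed
    finally have EA: "E \<ge> A / 2" .
    define thr where "thr = A / (4 * ln')"
    define t where "t = E - thr"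
    have thr_le: "thr \<le> A / 4" unfolding thr_def using ln1 Apos by (intro divide_left_mono) auto
    have t1: "t \<ge> A / 4" using EA thr_le by (simp add: t_def)
    have t2: "t \<le> 2 * real n * 2"
    proof -
      have "thr \<ge> 0" using Apos ln1 by (simp add: thr_def)
      thus ?thesis using E_le by (simp add: t_def)
    qed
    have t0: "t \<ge> 0" using t1 Apos by simp
    define Bad where "Bad = {x\<in>P. X x \<le> E - t}"
    have bX: "bdd_diff n {..<m} 2 X" using bdd_singleton[of n m] Xeq by simp
    have cardBad: "card Bad \<le> real (card {..<m}) ^ n * exp (- (t^2) / (4 * real n * 2^2))"
      unfolding Bad_def E_def P_def using tail[of "{..<m}" 2 n X t] bX mpos npos t0 t2 by (simp add: lessThan_empty_iff)
    have expo: "exp (- (t^2) / (4 * real n * 2^2)) \<le> real n powr (- c)"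
    proof -
      have "A^2 = real n powr (of_nat 2 * (1 - 1 / \<beta>))"
        unfolding A_def using n1 by (intro powr_power) simp
      also have "of_nat 2 * (1 - 1 / \<beta>) = 2 - 2 / \<beta>" by simp
      finally have "A^2 = real n powr (2 - 2 / \<beta>)" .
      also have "\<dots> \<ge> real n powr (3/2)"
        using n1 assms(1) by (intro powr_mono) (auto simp: field_simps)
      finally have A2: "A^2 \<ge> real n powr (3/2)" .
      have "t^2 \<ge> (A/4)^2" using t1 Apos by (intro power_mono) auto
      hence "real n powr (3/2) / 16 \<le> t^2" using A2 by (simp add: power_divide)
      hence "(real n powr (3/2) / 16) / (16 * real n) \<le> t^2 / (16 * real n)"
        by (intro divide_right_mono) auto
      moreover have "(real n powr (3/2) / 16) / (16 * real n) = real n powr (3/2) / (256 * real n)"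
        by simp
      ultimately have "t^2 / (16 * real n) \<ge> real n powr (3/2) / (256 * real n)" by simp
      also have "real n powr (3/2) / (256 * real n) = sqrt (real n) / 256"
      proof -
        have "real n * real n powr (1/2) = real n powr (1 + 1/2)"
          by (rule powr_mult_base) simp
        hence "real n powr (3/2) = real n * sqrt (real n)"
          by (simp add: powr_half_sqrt)
        thus ?thesis using n1 by simp
      qed
      finally have T: "t^2 / (16 * real n) \<ge> sqrt (real n) / 256" .
      have "exp (- (t^2) / (4 * real n * 2^2)) = exp (- (t^2 / (16 * real n)))" by simp
      also have "\<dots> \<le> exp (- (c * ln (real n)))" using T F by simp
      also have "\<dots> = real n powr (- c)" using n1 by (simp add: powr_def)
      finally show ?thesis .
    qed
    have BadP: "real (card Bad) / real (card P) \<le> real n powr (- c)"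
    proof -
      have "real (card Bad) \<le> real (card P) * real n powr (- c)"
        using cardBad mult_left_mono[OF expo, of "real m ^ n"] cardP by simp
      thus ?thesis using PnE finP by (simp add: divide_le_eq card_gt_0_iff mult.commute)
    qed
    define G where "G = {f. real (singleton_bins n m f) \<ge> real n powr (1 - 1 / \<beta>) / (4 * ln (real n))}"
    have PG: "P \<inter> G \<supseteq> P - Bad"
      by (auto simp: G_def Bad_def t_def thr_def A_def ln'_def X_def)
    have "measure_pmf.prob (balls_into_bins n m) G = real (card (P \<inter> G)) / real (card P)"
      unfolding balls_into_bins_def P_def[symmetric] using finP PnE by (simp add: measure_pmf_of_set)
    also have "\<dots> \<ge> real (card (P - Bad)) / real (card P)"
      using PG finP by (intro divide_right_mono) (auto intro: card_mono)
    finally have "measure_pmf.prob (balls_into_bins n m) G \<ge> real (card (P - Bad)) / real (card P)" .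
    moreover have "real (card (P - Bad)) = real (card P) - real (card Bad)"
      using finP by (simp add: Bad_def card_Diff_subset of_nat_diff card_mono)
    ultimately have "measure_pmf.prob (balls_into_bins n m) G \<ge> 1 - real (card Bad) / real (card P)"
      using PnE finP by (simp add: diff_divide_distrib card_gt_0_iff)
    with BadP have "measure_pmf.prob (balls_into_bins n m) G \<ge> 1 - real n powr (- c)" by linarith
    thus "measure_pmf.prob (balls_into_bins n m)
             {f. real (singleton_bins n m f) \<ge> real n powr (1 - 1 / \<beta>) / (4 * ln (real n))}
           \<ge> 1 - real n powr (- c)" by (simp add: G_def)
  qed
qed

end
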